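(* For every nonzero integer $m$, every $i\in\mathbb Z$, $k\in\frac12\mathbb Z$, $r\in\mathbb Z_{\ge0}$ and every integer $s>2r$, $$\sum_{p=0}^{s}(-1)^p\left[\begin{matrix}i+m\\ p\end{matrix}\right]_m\left[\begin{matrix}i+(r-p-2)m\\ r\end{matrix}\right]_m\left[\begin{matrix}i+(r-p+1)m\\ s-p\end{matrix}\right]_m=0$$ and $$\sum_{p=0}^{s}(-1)^p\left[\begin{matrix}k+\frac m2\\ p\end{matrix}\right]_m\left[\begin{matrix}k+(r-p-\frac32)m\\ r\end{matrix}\right]_m\left[\begin{matrix}k+(r-p+\frac12)m\\ s-p\end{matrix}\right]_m=0.$$
   Context: For $a,c$ in a field of characteristic zero and $r\in\mathbb Z_{\ge0}$: $\left[\begin{matrix}a\\ r\end{matrix}\right]_c=\frac{a(a-c)(a-2c)\cdots(a-(r-1)c)}{r!}$ ($=1$ if $r=0$). *)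

theory Defs
  imports Complex_Main
begin

text \<open>Generalized binomial with step c:
  [a; r]_c = a(a-c)(a-2c)...(a-(r-1)c) / r!  (= 1 for r = 0).\<close>
definition cbinom :: "'a::field_char_0 \<Rightarrow> 'a \<Rightarrow> nat \<Rightarrow> 'a" where
  "cbinom a c r = (\<Prod>j<r. a - of_nat j * c) / of_nat (fact r)"

end

theory Submission imports Defs "HOL-Computational_Algebra.Formal_Power_Series" "HOL-Computational_Algebra.Formal_Power_Series" begin

lemma base_sum:
  fixes z y :: real
  shows "(\<Sum>p=0..s. (-1)^p * (z gchoose p) * ((y - of_nat p) gchoose (s - p)))
         = (-1)^s * ((z + of_nat s - y - 1) gchoose s)"
proof -
  have "(\<Sum>p=0..s. (-1)^p * (z gchoose p) * ((y - of_nat p) gchoose (s - p)))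
      = (\<Sum>p=0..s. (-1)^s * ((z gchoose p) * ((of_nat s - y - 1) gchoose (s - p))))"
  proof (rule sum.cong)
    fix p assume p: "p \<in> {0..s}"
    have e: "((y - of_nat p) gchoose (s - p)) = (-1)^(s-p) * ((of_nat (s-p) - (y - of_nat p) - 1) gchoose (s-p))"
      by (rule gbinomial_negated_upper)
    have e2: "(of_nat (s-p) - (y - of_nat p) - 1 :: real) = of_nat s - y - 1"
      using p by (simp add: of_nat_diff)
    have e3: "(-1::real)^p * (-1)^(s-p) = (-1)^s"
      using p by (simp flip: power_add)
    show "(-1)^p * (z gchoose p) * ((y - of_nat p) gchoose (s - p)) = (-1)^s * ((z gchoose p) * ((of_nat s - y - 1) gchoose (s - p)))"
      unfolding e e2 using e3 by (metis mult.assoc mult.left_commute)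
  qed simp
  also have "\<dots> = (-1)^s * ((z + (of_nat s - y - 1)) gchoose s)"
    by (simp add: sum_distrib_left [symmetric] gbinomial_Vandermonde)
  finally show ?thesis by (simp add: algebra_simps)
qed

lemma trinom:
  fixes x :: real
  shows "(x gchoose p) * ((x - of_nat p) gchoose j) = (x gchoose j) * ((x - of_nat j) gchoose p)"
proof -
  have a: "(x gchoose (p+j)) * (of_nat (p+j) gchoose p) = (x gchoose p) * ((x - of_nat p) gchoose j)"
    using gbinomial_trinomial_revision[of p "p+j" x] by simp
  have b: "(x gchoose (p+j)) * (of_nat (p+j) gchoose j) = (x gchoose j) * ((x - of_nat j) gchoose p)"
    using gbinomial_trinomial_revision[of j "p+j" x] by simp
  have c: "(of_nat (p+j) gchoose p :: real) = of_nat (p+j) gchoose j"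
    by (metis binomial_gbinomial binomial_symmetric add_diff_cancel_left' le_add1 add.commute)
  show ?thesis using a b c by simp
qed

lemma main_ident:
  fixes t a :: real
  assumes "s > 2 * r"
  shows "(\<Sum>p=0..s. (-1)^p * ((t+1) gchoose p) * ((t + of_nat r + a - of_nat p) gchoose r)
            * ((t + of_nat r + 1 - of_nat p) gchoose (s - p))) = 0"
proof -
  define x where "x = t + 1"
  define y where "y = t + of_nat r + 1"
  define w where "w = of_nat r + a - 1"
  have split: "((t + of_nat r + a - of_nat p) gchoose r) = (\<Sum>j=0..r. ((x - of_nat p) gchoose j) * (w gchoose (r - j)))" for p
    using gbinomial_Vandermonde[of "x - of_nat p" w r] by (simp add: x_def w_def algebra_simps)
  have "(\<Sum>p=0..s. (-1)^p * ((t+1) gchoose p) * ((t + of_nat r + a - of_nat p) gchoose r)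
            * ((t + of_nat r + 1 - of_nat p) gchoose (s - p)))
     = (\<Sum>p=0..s. \<Sum>j=0..r. (w gchoose (r - j)) * (x gchoose j) * ((-1)^p * ((x - of_nat j) gchoose p) * ((y - of_nat p) gchoose (s - p))))"
    unfolding split
    by (rule sum.cong, simp, simp add: sum_distrib_left sum_distrib_right x_def[symmetric] y_def[symmetric],
        rule sum.cong, simp, simp add: trinom[symmetric] y_def algebra_simps)
  also have "\<dots> = (\<Sum>j=0..r. (w gchoose (r - j)) * (x gchoose j) * (\<Sum>p=0..s. (-1)^p * ((x - of_nat j) gchoose p) * ((y - of_nat p) gchoose (s - p))))"
    by (subst sum.swap) (simp add: sum_distrib_left)
  also have "\<dots> = 0"
  proof (rule sum.neutral, rule ballI)
    fix j assume j: "j \<in> {0..r}"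
    have "(x - of_nat j + of_nat s - y - 1) = of_nat (s - r - j - 1)"
      using j assms by (simp add: x_def y_def of_nat_diff)
    moreover have "(of_nat (s - r - j - 1) gchoose s :: real) = 0"
      using assms by (simp flip: binomial_gbinomial add: binomial_eq_0)
    ultimately show "(w gchoose (r - j)) * (x gchoose j) * (\<Sum>p=0..s. (-1)^p * ((x - of_nat j) gchoose p) * ((y - of_nat p) gchoose (s - p))) = 0"
      by (simp add: base_sum)
  qed
  finally show ?thesis .
qed

lemma cbinom_gchoose:
  fixes a c :: real
  assumes "c \<noteq> 0"
  shows "cbinom a c n = c ^ n * ((a / c) gchoose n)"
proof -
  have "(\<Prod>j<n. a - of_nat j * c) = (\<Prod>j<n. c * (a / c - of_nat j))"
    using assms by (intro prod.cong) (auto simp: field_simps)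
  also have "\<dots> = c ^ n * (\<Prod>j<n. a / c - of_nat j)"
    by (simp add: prod.distrib)
  finally show ?thesis
    by (simp add: cbinom_def gbinomial_prod_rev atLeast0LessThan)
qed

theorem mainTheorem2:
  fixes m i :: int and k :: real and r s :: nat
  assumes "m \<noteq> 0" and "\<exists>j::int. k = of_int j / 2" and "s > 2 * r"
  shows "(\<Sum>p=0..s. (-1::real) ^ p
            * cbinom (of_int (i + m)) (of_int m) p
            * cbinom (of_int (i + (int r - int p - 2) * m)) (of_int m) r
            * cbinom (of_int (i + (int r - int p + 1) * m)) (of_int m) (s - p)) = 0
       \<and> (\<Sum>p=0..s. (-1::real) ^ p
            * cbinom (k + of_int m / 2) (of_int m) p
            * cbinom (k + (of_int (int r - int p) - 3/2) * of_int m) (of_int m) r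
            * cbinom (k + (of_int (int r - int p) + 1/2) * of_int m) (of_int m) (s - p)) = 0"
proof
  define M where "M = (of_int m :: real)"
  have M: "M \<noteq> 0" using assms(1) by (simp add: M_def)
  have pw: "M ^ p * M ^ r * M ^ (s - p) = M ^ (r + s)" if "p \<le> s" for p
    using that by (simp flip: power_add)
  have gen: "(\<Sum>p=0..s. (-1::real) ^ p * cbinom (A p) M p * cbinom (B p) M r * cbinom (C p) M (s - p)) = 0"
    if h: "\<And>p. p \<le> s \<Longrightarrow> (-1::real) ^ p * cbinom (A p) M p * cbinom (B p) M r * cbinom (C p) M (s - p)
       = M ^ (r + s) * ((-1)^p * ((t+1) gchoose p) * ((t + of_nat r + a - of_nat p) gchoose r)
            * ((t + of_nat r + 1 - of_nat p) gchoose (s - p)))"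
    for t a :: real and A B C :: "nat \<Rightarrow> real"
    proof -
      have "(\<Sum>p=0..s. (-1::real) ^ p * cbinom (A p) M p * cbinom (B p) M r * cbinom (C p) M (s - p))
         = (\<Sum>p=0..s. M ^ (r + s) * ((-1)^p * ((t+1) gchoose p) * ((t + of_nat r + a - of_nat p) gchoose r)
            * ((t + of_nat r + 1 - of_nat p) gchoose (s - p))))"
        by (rule sum.cong) (simp_all add: h)
      also have "\<dots> = 0"
        using main_ident[OF assms(3), of t a] by (simp add: sum_distrib_left[symmetric])
      finally show ?thesis .
    qed

  show "(\<Sum>p=0..s. (-1::real) ^ p
            * cbinom (of_int (i + m)) (of_int m) p
            * cbinom (of_int (i + (int r - int p - 2) * m)) (of_int m) r
            * cbinom (of_int (i + (int r - int p + 1) * m)) (of_int m) (s - p)) = 0"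
    unfolding M_def[symmetric]
  proof (rule gen[where t = "of_int i / M" and a = "-2"])
    fix p assume p: "p \<le> s"
    show "(-1::real) ^ p * cbinom (of_int (i + m)) M p * cbinom (of_int (i + (int r - int p - 2) * m)) M r * cbinom (of_int (i + (int r - int p + 1) * m)) M (s - p)
       = M ^ (r + s) * ((-1)^p * ((of_int i / M + 1) gchoose p) * ((of_int i / M + of_nat r + -2 - of_nat p) gchoose r)
            * ((of_int i / M + of_nat r + 1 - of_nat p) gchoose (s - p)))"
      using M pw[OF p] by (simp add: cbinom_gchoose M_def field_simps)
  qed
  show "(\<Sum>p=0..s. (-1::real) ^ p
            * cbinom (k + of_int m / 2) (of_int m) p
            * cbinom (k + (of_int (int r - int p) - 3/2) * of_int m) (of_int m) r
            * cbinom (k + (of_int (int r - int p) + 1/2) * of_int m) (of_int m) (s - p)) = 0"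
    unfolding M_def[symmetric]
  proof (rule gen[where t = "k / M - 1/2" and a = "-1"])
    fix p assume p: "p \<le> s"
    show "(-1::real) ^ p * cbinom (k + M / 2) M p * cbinom (k + (of_int (int r - int p) - 3/2) * M) M r * cbinom (k + (of_int (int r - int p) + 1/2) * M) M (s - p)
       = M ^ (r + s) * ((-1)^p * ((k / M - 1/2 + 1) gchoose p) * ((k / M - 1/2 + of_nat r + -1 - of_nat p) gchoose r)
            * ((k / M - 1/2 + of_nat r + 1 - of_nat p) gchoose (s - p)))"
      using M pw[OF p] by (simp add: cbinom_gchoose field_simps)
  qed
qed

end
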